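(* Let $\psi,\chi,\theta>0$ and $q\in(0,1)$. Let $N$ be mixed Poisson, $N\sim\mathrm{Poisson}(\Lambda)$ with $\Lambda\sim\mathrm{GIG}(\psi,\chi,\theta)$, and let $X_1,X_2,\dots$ be independent copies of $X\sim\mathrm{Geo}(1,q)$, independent of $N$; let $L=X_1+\dots+X_N$. Then $a_n=\mathbb{P}[L=n]$ satisfies \[ a_n\sim C\,\chi^{-\theta/2}D^{-\theta}(2n)^{\theta-1}z_1^{-n}\qquad(n\to\infty), \] where \[ C=\frac{\psi^{\theta/2}}{K_\theta(\sqrt{\chi\psi})},\qquad z_1=\frac{1}{1-\psi q/(2+\psi)},\qquad D=\frac{(2+\psi)(2+\psi(1-q))}{2q}. \]
   Context: $\mathrm{GIG}(\psi,\chi,\theta)$ is the generalized inverse Gaussian distribution; for $N\sim\mathrm{Poisson}(\Lambda)$ with such $\Lambda$ the probability generating function of $N$ is \[ \varphi_N(z)=\frac{\psi^{\theta/2}}{K_\theta(\sqrt{\psi\chi})}(\psi+2-2z)^{-\theta/2}K_\theta\big(\sqrt{\chi(\psi+2-2z)}\big), \] where $K_\theta$ is the modified Bessel function of the second kind. $\mathrm{Geo}(1,q)$ is the shifted geometric distribution $\mathbb{P}[X=k]=q(1-q)^{k-1}$, $k\ge1$, with probability generating function $\varphi_X(z)=\frac{qz}{1-(1-q)z}$. The probability generating function of $L$ is $\varphi_N(\varphi_X(z))$. *)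

theory Defs
  imports "HOL-Probability.Probability"
begin

definition besselK :: "real \<Rightarrow> real \<Rightarrow> real" where
  "besselK \<nu> x = (1/2) * (LINT t:{0<..}|lborel. t powr (\<nu> - 1) * exp (- x / 2 * (t + 1 / t)))"

definition gig_density :: "real \<Rightarrow> real \<Rightarrow> real \<Rightarrow> real \<Rightarrow> real" where
  "gig_density \<psi> chi \<theta> x =
     (if x > 0 then (\<psi> / chi) powr (\<theta> / 2) / (2 * besselK \<theta> (sqrt (\<psi> * chi)))
        * x powr (\<theta> - 1) * exp (- (chi / x + \<psi> * x) / 2) else 0)"

definition mixed_poisson_gig :: "real \<Rightarrow> real \<Rightarrow> real \<Rightarrow> nat \<Rightarrow> real" where
  "mixed_poisson_gig \<psi> chi \<theta> k =
     (LINT l:{0<..}|lborel. pmf (poisson_pmf l) k * gig_density \<psi> chi \<theta> l)"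

text \<open>Shifted geometric distribution Geo(1,q): P[X = k] = q (1-q)^(k-1), k >= 1.\<close>
definition geo1_pmf :: "real \<Rightarrow> nat pmf" where
  "geo1_pmf q = map_pmf Suc (geometric_pmf q)"

fun geo1_sum_pmf :: "real \<Rightarrow> nat \<Rightarrow> nat pmf" where
  "geo1_sum_pmf q 0 = return_pmf 0"
| "geo1_sum_pmf q (Suc k) = bind_pmf (geo1_sum_pmf q k) (\<lambda>s. map_pmf (\<lambda>x. s + x) (geo1_pmf q))"

text \<open>a_n = P[L = n], L = X_1 + ... + X_N with N independent of the X_i
  (law of total probability over N).\<close>
definition compound_prob :: "real \<Rightarrow> real \<Rightarrow> real \<Rightarrow> real \<Rightarrow> nat \<Rightarrow> real" where
  "compound_prob \<psi> chi \<theta> q n = (\<Sum>k. mixed_poisson_gig \<psi> chi \<theta> k * pmf (geo1_sum_pmf q k) n)"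

end

theory Submission
  imports Defs
begin


lemma gamma_ratio:
  fixes \<theta> :: real assumes th: "\<theta> > 0"
  shows "(\<lambda>n. Gamma (real n + \<theta>) / (fact n * real n powr (\<theta> - 1))) \<longlonglongrightarrow> 1"
proof -
  have nz: "\<theta> \<notin> \<int>\<^sub>\<le>\<^sub>0" using th by (auto elim!: nonpos_Ints_cases)
  have L: "(\<lambda>n. Gamma_series \<theta> n / Gamma \<theta>) \<longlonglongrightarrow> Gamma \<theta> / Gamma \<theta>"
    using Gamma_real_pos[OF th] by (intro tendsto_intros) auto
  hence L1: "(\<lambda>n. Gamma_series \<theta> n / Gamma \<theta>) \<longlonglongrightarrow> 1" using Gamma_real_pos[OF th] by simp
  have L2: "(\<lambda>n. real n / (real n + \<theta>)) \<longlonglongrightarrow> 1"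
  proof -
    have "(\<lambda>n. 1 / (1 + \<theta> * inverse (real n))) \<longlonglongrightarrow> 1 / (1 + \<theta> * 0)"
      using lim_inverse_n[where 'a=real] by (intro tendsto_intros) auto
    moreover have "eventually (\<lambda>n. 1 / (1 + \<theta> * inverse (real n)) = real n / (real n + \<theta>)) sequentially"
      using eventually_gt_at_top[of 0] by eventually_elim (simp add: field_simps)
    ultimately show ?thesis by (simp add: tendsto_cong)
  qed
  have "(\<lambda>n. inverse (Gamma_series \<theta> n / Gamma \<theta>) * (real n / (real n + \<theta>))) \<longlonglongrightarrow> inverse 1 * 1"
    by (intro tendsto_intros L1 L2) auto
  moreover have "eventually (\<lambda>n. inverse (Gamma_series \<theta> n / Gamma \<theta>) * (real n / (real n + \<theta>))
      = Gamma (real n + \<theta>) / (fact n * real n powr (\<theta> - 1))) sequentially"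
    using eventually_gt_at_top[of 0]
  proof eventually_elim
    case (elim n)
    have g1: "Gamma (real n + \<theta> + 1) = (real n + \<theta>) * Gamma (real n + \<theta>)"
      using Gamma_plus1[of "real n + \<theta>"] th
      by (metis add_pos_nonneg nonpos_Ints_cases' of_nat_0_le_iff add.commute less_le_not_le nonpos_Ints_nonpos)
    have p: "pochhammer \<theta> (n+1) = Gamma (\<theta> + real (n+1)) / Gamma \<theta>"
      using pochhammer_Gamma[OF nz] by simp
    have e: "exp (\<theta> * ln (real n)) = real n powr \<theta>" using elim by (simp add: powr_def)
    have pw: "real n powr \<theta> = real n * real n powr (\<theta> - 1)"
      using elim by (simp add: powr_diff)
    have gpos: "Gamma (real n + \<theta>) > 0" using th elim by simp
    have "Gamma \<theta> > 0" using th by simp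
    have gs: "Gamma_series \<theta> n = fact n * real n powr \<theta> * Gamma \<theta> / Gamma (real n + \<theta> + 1)"
      unfolding Gamma_series_def p using e by (simp add: add_ac)
    have gne: "Gamma \<theta> \<noteq> 0" using \<open>Gamma \<theta> > 0\<close> by simp
    have pp: "real n powr (\<theta> - 1) > 0" using elim by simp
    have fp: "(fact n :: real) > 0" by simp
    have npos: "real n + \<theta> > 0" using th by simp
    show ?case unfolding gs g1 pw using gpos \<open>Gamma \<theta> > 0\<close> elim th pp fp npos
      by (simp add: divide_simps) (simp add: algebra_simps gne)
  qed
  ultimately show ?thesis by (simp add: tendsto_cong)
qed


definition bn :: "nat \<Rightarrow> real \<Rightarrow> nat \<Rightarrow> real" where
  "bn m p j = real (m choose j) * p ^ j * (1 - p) ^ (m - j)"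

lemma bn_nonneg: "0 \<le> p \<Longrightarrow> p \<le> 1 \<Longrightarrow> bn m p j \<ge> 0"
  unfolding bn_def by simp

lemma bn_sum: "(\<Sum>j\<le>m. bn m p j) = 1"
  unfolding bn_def using binomial_ring[of p "1 - p" m] by (simp add: atLeast0AtMost)

lemma bn_Suc: "real (Suc j) * bn (Suc m) p (Suc j) = real (Suc m) * p * bn m p j"
proof -
  have "real (Suc j) * real (Suc m choose Suc j) = real (Suc m) * real (m choose j)"
    using Suc_times_binomial[of j m] by (metis of_nat_mult)
  note eq = this
  have "real (Suc j) * bn (Suc m) p (Suc j) = real (Suc j) * real (Suc m choose Suc j) * (p * (p ^ j * (1 - p) ^ (m - j)))"
    unfolding bn_def by (simp only: diff_Suc_Suc power_Suc mult_ac)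
  also have "\<dots> = real (Suc m) * real (m choose j) * (p * (p ^ j * (1 - p) ^ (m - j)))"
    by (simp only: eq)
  also have "\<dots> = real (Suc m) * p * bn m p j" unfolding bn_def by (simp only: mult_ac)
  finally show ?thesis .
qed

lemma bn_mom1: "(\<Sum>j\<le>m. real j * bn m p j) = real m * p"
proof (cases m)
  case 0 thus ?thesis by simp
next
  case (Suc m')
  have "(\<Sum>j\<le>Suc m'. real j * bn (Suc m') p j) = (\<Sum>j\<le>m'. real (Suc j) * bn (Suc m') p (Suc j))"
    by (subst sum.atMost_Suc_shift) simp
  also have "\<dots> = (\<Sum>j\<le>m'. real (Suc m') * p * bn m' p j)" by (simp only: bn_Suc)
  also have "\<dots> = real (Suc m') * p" by (simp add: sum_distrib_left[symmetric] bn_sum)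
  finally show ?thesis using Suc by simp
qed

lemma bn_mom2: "(\<Sum>j\<le>m. real j ^ 2 * bn m p j) = real m * p + real m * (real m - 1) * p ^ 2"
proof (cases m)
  case 0 thus ?thesis by simp
next
  case (Suc m')
  have "(\<Sum>j\<le>Suc m'. real j ^ 2 * bn (Suc m') p j) = (\<Sum>j\<le>m'. real (Suc j) * (real (Suc j) * bn (Suc m') p (Suc j)))"
    by (subst sum.atMost_Suc_shift) (simp add: power2_eq_square mult.assoc)
  also have "\<dots> = (\<Sum>j\<le>m'. real (Suc m') * p * (real j * bn m' p j + bn m' p j))"
    by (simp only: bn_Suc) (simp add: algebra_simps)
  also have "\<dots> = real (Suc m') * p * (real m' * p + 1)"
    by (simp add: sum_distrib_left[symmetric] sum.distrib bn_sum bn_mom1)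
  finally show ?thesis using Suc by (simp add: algebra_simps power2_eq_square)
qed

lemma bn_var: "(\<Sum>j\<le>m. (real j - real m * p) ^ 2 * bn m p j) = real m * p * (1 - p)"
proof -
  have "(\<Sum>j\<le>m. (real j - real m * p) ^ 2 * bn m p j) =
    (\<Sum>j\<le>m. real j ^ 2 * bn m p j) - 2 * (real m * p) * (\<Sum>j\<le>m. real j * bn m p j)
      + (real m * p) ^ 2 * (\<Sum>j\<le>m. bn m p j)"
  proof -
    have "\<And>j. (real j - real m * p) ^ 2 * bn m p j = real j ^ 2 * bn m p j - 2 * (real m * p) * (real j * bn m p j) + (real m * p) ^ 2 * bn m p j"
      by (simp add: power2_diff algebra_simps)
    hence "(\<Sum>j\<le>m. (real j - real m * p) ^ 2 * bn m p j) = (\<Sum>j\<le>m. real j ^ 2 * bn m p j - 2 * (real m * p) * (real j * bn m p j) + (real m * p) ^ 2 * bn m p j)"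
      by (intro sum.cong) auto
    thus ?thesis by (simp only: sum.distrib sum_subtractf sum_distrib_left[symmetric])
  qed
  also have "\<dots> = real m * p * (1 - p)"
    by (simp only: bn_sum bn_mom1 bn_mom2) (simp add: algebra_simps power2_eq_square)
  finally show ?thesis .
qed

lemma conc:
  fixes F :: "nat \<Rightarrow> nat \<Rightarrow> real" and B :: "nat \<Rightarrow> real" and p :: real
  assumes p: "0 < p" "p < 1"
    and FB: "\<And>m j. j \<le> m \<Longrightarrow> \<bar>F m j\<bar> \<le> B m"
    and Blim: "(\<lambda>m. B m / real m) \<longlonglongrightarrow> 0"
    and win: "\<And>\<epsilon>. \<epsilon> > 0 \<Longrightarrow> \<exists>\<delta>>0. \<exists>M. \<forall>m\<ge>M. \<forall>j\<le>m. \<bar>real j - real m * p\<bar> \<le> \<delta> * real m \<longrightarrow> \<bar>F m j\<bar> \<le> \<epsilon>"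
  shows "(\<lambda>m. \<Sum>j\<le>m. F m j * bn m p j) \<longlonglongrightarrow> 0"
proof (rule tendstoI)
  fix e :: real assume e: "e > 0"
  obtain \<delta> M where \<delta>: "\<delta> > 0" and M: "\<And>m j. m \<ge> M \<Longrightarrow> j \<le> m \<Longrightarrow> \<bar>real j - real m * p\<bar> \<le> \<delta> * real m \<Longrightarrow> \<bar>F m j\<bar> \<le> e / 2"
    using win[of "e/2"] e by auto
  have Bnn: "B m \<ge> 0" for m using FB[of 0 m] by linarith
  have "(\<lambda>m. B m / real m * (p * (1 - p) / \<delta>\<^sup>2)) \<longlonglongrightarrow> 0 * (p * (1 - p) / \<delta>\<^sup>2)"
    by (intro tendsto_intros Blim)
  hence "eventually (\<lambda>m. dist (B m / real m * (p * (1 - p) / \<delta>\<^sup>2)) 0 < e / 2) sequentially"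
    using e by (intro tendstoD) auto
  thus "eventually (\<lambda>m. dist (\<Sum>j\<le>m. F m j * bn m p j) 0 < e) sequentially"
    using eventually_ge_at_top[of "Suc M"]
  proof eventually_elim
    case (elim m)
    have m0: "real m > 0" using elim by simp
    have pt: "\<bar>F m j * bn m p j\<bar> \<le> e / 2 * bn m p j + B m / (\<delta> * real m)\<^sup>2 * ((real j - real m * p) ^ 2 * bn m p j)"
      if j: "j \<le> m" for j
    proof -
      have bnn: "bn m p j \<ge> 0" using bn_nonneg p by simp
      have t2: "0 \<le> B m / (\<delta> * real m)\<^sup>2 * ((real j - real m * p) ^ 2 * bn m p j)"
        using Bnn bnn by simp
      show ?thesis
      proof (cases "\<bar>real j - real m * p\<bar> \<le> \<delta> * real m")
        case True
        hence Fe: "\<bar>F m j\<bar> \<le> e / 2" using M[of m j] elim j by simp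
        have "\<bar>F m j * bn m p j\<bar> \<le> e / 2 * bn m p j" using mult_right_mono[OF Fe bnn]
          by (simp add: abs_mult abs_of_nonneg bnn)
        thus ?thesis using t2 by linarith
      next
        case False
        hence "\<delta> * real m \<le> \<bar>real j - real m * p\<bar>" by simp
        hence "(\<delta> * real m)\<^sup>2 \<le> \<bar>real j - real m * p\<bar>\<^sup>2"
          using \<delta> m0 by (intro power_mono) auto
        hence "(\<delta> * real m)\<^sup>2 \<le> (real j - real m * p) ^ 2" by simp
        moreover have "(\<delta> * real m)\<^sup>2 > 0" using \<delta> m0 by simp
        ultimately have r1: "1 \<le> (real j - real m * p) ^ 2 / (\<delta> * real m)\<^sup>2"
          by (simp add: divide_simps)
        have "B m * bn m p j * 1 \<le> B m * bn m p j * ((real j - real m * p) ^ 2 / (\<delta> * real m)\<^sup>2)"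
          using mult_left_mono[OF r1, of "B m * bn m p j"] Bnn bnn by simp
        moreover have "B m * bn m p j * ((real j - real m * p) ^ 2 / (\<delta> * real m)\<^sup>2)
             = B m / (\<delta> * real m)\<^sup>2 * ((real j - real m * p) ^ 2 * bn m p j)" by simp
        moreover have "\<bar>F m j * bn m p j\<bar> \<le> B m * bn m p j"
          using mult_right_mono[OF FB[OF j] bnn] by (simp add: abs_mult abs_of_nonneg bnn)
        moreover have "0 \<le> e / 2 * bn m p j" using e bnn by simp
        ultimately show ?thesis by linarith
      qed
    qed
    have "\<bar>\<Sum>j\<le>m. F m j * bn m p j\<bar> \<le> (\<Sum>j\<le>m. \<bar>F m j * bn m p j\<bar>)" by (rule sum_abs)
    also have "\<dots> \<le> (\<Sum>j\<le>m. e / 2 * bn m p j + B m / (\<delta> * real m)\<^sup>2 * ((real j - real m * p) ^ 2 * bn m p j))"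
      by (intro sum_mono pt) simp
    also have "\<dots> = e / 2 + B m / (\<delta> * real m)\<^sup>2 * (real m * p * (1 - p))"
    proof -
      have "(\<Sum>j\<le>m. e / 2 * bn m p j) = e / 2" by (simp only: sum_distrib_left[symmetric] bn_sum mult_1_right)
      moreover have "(\<Sum>j\<le>m. B m / (\<delta> * real m)\<^sup>2 * ((real j - real m * p) ^ 2 * bn m p j)) =
         B m / (\<delta> * real m)\<^sup>2 * (real m * p * (1 - p))"
        by (subst sum_distrib_left[symmetric]) (simp only: bn_var)
      ultimately show ?thesis by (simp only: sum.distrib)
    qed
    also have "B m / (\<delta> * real m)\<^sup>2 * (real m * p * (1 - p)) = B m / real m * (p * (1 - p) / \<delta>\<^sup>2)"
      using m0 \<delta> by (simp add: field_simps power2_eq_square)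
    finally have fin: "\<bar>\<Sum>j\<le>m. F m j * bn m p j\<bar> \<le> e / 2 + B m / real m * (p * (1 - p) / \<delta>\<^sup>2)" .
    from elim(1) have "\<bar>B m / real m * (p * (1 - p) / \<delta>\<^sup>2) - 0\<bar> < e / 2" unfolding dist_real_def .
    with fin show ?case unfolding dist_real_def by linarith
  qed
qed


lemma window:
  fixes h :: "nat \<Rightarrow> real" and \<theta> p :: real
  assumes th: "\<theta> > 0" and p: "0 < p" "p < 1" and h: "h \<longlonglongrightarrow> 1"
  shows "(\<lambda>m. \<Sum>j\<le>m. h (Suc j) * ((real j + 1) / (real m * p)) powr (\<theta> - 1) * bn m p j) \<longlonglongrightarrow> 1"
proof -
  define u where "u m j = ((real j + 1) / (real m * p)) powr (\<theta> - 1)" for m j :: nat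
  define F where "F m j = h (Suc j) * u m j - 1" for m j :: nat
  obtain H where H: "H > 0" "\<And>k. \<bar>h k\<bar> \<le> H"
    using convergent_imp_Bseq[OF convergentI[OF h]] unfolding Bseq_def by auto
  define U where "U m = (2 / p) powr (\<theta> - 1) + (real m * p) powr (1 - \<theta>)" for m :: nat
  have u_nn: "u m j \<ge> 0" for m j unfolding u_def by simp
  have uU: "u m j \<le> U m" if "j \<le> m" for m j
  proof (cases "m = 0")
    case True thus ?thesis by (simp add: u_def U_def)
  next
    case False
    hence m1: "real m \<ge> 1" by simp
    have x0: "(real j + 1) / (real m * p) > 0" using p m1 by simp
    show ?thesis
    proof (cases "\<theta> \<ge> 1")
      case True
      have "(real j + 1) / (real m * p) \<le> 2 / p"
        using that m1 p by (simp add: divide_simps)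
      hence "u m j \<le> (2 / p) powr (\<theta> - 1)" unfolding u_def using True x0
        by (intro powr_mono2) auto
      thus ?thesis unfolding U_def using powr_ge_zero[of "real m * p" "1-\<theta>"] by linarith
    next
      case False
      have "1 / (real m * p) \<le> (real j + 1) / (real m * p)"
        using m1 p by (intro divide_right_mono) auto
      hence "u m j \<le> (1 / (real m * p)) powr (\<theta> - 1)" unfolding u_def using False m1 p
        by (intro powr_mono2') auto
      also have "\<dots> = (real m * p) powr (1 - \<theta>)"
        using m1 p by (simp add: powr_divide powr_minus_divide[symmetric] powr_minus)
      finally show ?thesis unfolding U_def using powr_ge_zero[of "2 / p" "\<theta>-1"] by linarith
    qed
  qed
  define B where "B m = H * U m + 1" for m
  have FB: "\<bar>F m j\<bar> \<le> B m" if "j \<le> m" for m j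
  proof -
    have "\<bar>h (Suc j)\<bar> * u m j \<le> H * U m"
      by (rule mult_mono[OF H(2) uU[OF that]]) (use H(1) u_nn in auto)
    hence "\<bar>h (Suc j) * u m j\<bar> \<le> H * U m" by (simp add: abs_mult abs_of_nonneg u_nn)
    thus ?thesis unfolding F_def B_def by linarith
  qed
  have Blim: "(\<lambda>m. B m / real m) \<longlonglongrightarrow> 0"
  proof -
    have "(\<lambda>m. H * (2 / p) powr (\<theta> - 1) * inverse (real m) + H * p powr (1 - \<theta>) * real m powr (- \<theta>) + inverse (real m))
        \<longlonglongrightarrow> H * (2 / p) powr (\<theta> - 1) * 0 + H * p powr (1 - \<theta>) * 0 + 0"
      by (intro tendsto_intros lim_inverse_n tendsto_neg_powr filterlim_real_sequentially)
        (use th in auto)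
    moreover have "eventually (\<lambda>m. H * (2 / p) powr (\<theta> - 1) * inverse (real m) + H * p powr (1 - \<theta>) * real m powr (- \<theta>) + inverse (real m) = B m / real m) sequentially"
      using eventually_gt_at_top[of "0::nat"]
    proof eventually_elim
      case (elim m)
      have hp: "(real m * p) powr (1 - \<theta>) = p powr (1 - \<theta>) * real m powr (- \<theta>) * real m"
        using elim p by (simp add: powr_mult powr_diff powr_minus divide_simps)
      show ?case unfolding B_def U_def hp using elim by (simp add: field_simps)
    qed
    ultimately show ?thesis by (simp add: tendsto_cong)
  qed
  have win: "\<exists>\<delta>>0. \<exists>M. \<forall>m\<ge>M. \<forall>j\<le>m. \<bar>real j - real m * p\<bar> \<le> \<delta> * real m \<longrightarrow> \<bar>F m j\<bar> \<le> \<epsilon>"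
    if e: "\<epsilon> > 0" for \<epsilon>
  proof -
    have cont: "((\<lambda>x::real. x powr (\<theta> - 1)) \<longlongrightarrow> 1 powr (\<theta> - 1)) (at 1)"
      by (intro tendsto_intros) auto
    obtain \<eta> where \<eta>: "\<eta> > 0" and \<eta>1: "\<And>x::real. x \<noteq> 1 \<Longrightarrow> norm (x - 1) < \<eta> \<Longrightarrow> norm (x powr (\<theta> - 1) - 1) < min (\<epsilon> / 2) 1"
      using LIM_D[OF cont, of "min (\<epsilon> / 2) 1"] e by auto
    have \<eta>2: "\<bar>x powr (\<theta> - 1) - 1\<bar> < min (\<epsilon> / 2) 1" if "\<bar>x - 1\<bar> < \<eta>" for x :: real
      using \<eta>1[of x] that e by (cases "x = 1") auto
    obtain N where N: "\<And>k. k \<ge> N \<Longrightarrow> \<bar>h k - 1\<bar> < \<epsilon> / 4"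
      using LIMSEQ_D[OF h, of "\<epsilon> / 4"] e by auto
    define \<delta> where "\<delta> = min (p / 2) (\<eta> * p / 2)"
    have \<delta>: "\<delta> > 0" using p \<eta> by (simp add: \<delta>_def)
    define M where "M = nat \<lceil>2 * real N / p + 4 / (\<eta> * p)\<rceil> + 1"
    have "\<forall>m\<ge>M. \<forall>j\<le>m. \<bar>real j - real m * p\<bar> \<le> \<delta> * real m \<longrightarrow> \<bar>F m j\<bar> \<le> \<epsilon>"
    proof (intro allI impI)
      fix m j assume mM: "m \<ge> M" and jm: "j \<le> m" and jw: "\<bar>real j - real m * p\<bar> \<le> \<delta> * real m"
      have mbig: "real m > 2 * real N / p + 4 / (\<eta> * p)"
        using mM unfolding M_def by linarith
      have m0: "real m > 0" using mbig p \<eta> by (smt (verit) divide_nonneg_nonneg mult_pos_pos of_nat_0_le_iff)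
      have mp0: "real m * p > 0" using m0 p by simp
      have "real m * p > (2 * real N / p + 4 / (\<eta> * p)) * p"
        using mbig p by (simp add: mult_strict_right_mono)
      also have "(2 * real N / p + 4 / (\<eta> * p)) * p = 2 * real N + 4 / \<eta>"
        using p \<eta> by (simp add: field_simps)
      finally have mpb: "real m * p > 2 * real N + 4 / \<eta>" .
      have "4 / \<eta> \<ge> 0" using \<eta> by simp
      hence mpN: "real m * p > 2 * real N" using mpb by linarith
      have d1: "\<delta> * real m \<le> p / 2 * real m" unfolding \<delta>_def using m0 by (intro mult_right_mono) auto
      have d2: "\<delta> * real m \<le> \<eta> * p / 2 * real m" unfolding \<delta>_def using m0 by (intro mult_right_mono) auto
      have "real j \<ge> real m * p - \<delta> * real m" using jw by linarith
      hence "real j \<ge> real m * p / 2" using d1 by (simp add: algebra_simps)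
      hence "real (Suc j) \<ge> real N" using mpN by simp
      hence hN: "\<bar>h (Suc j) - 1\<bar> < \<epsilon> / 4" using N by (simp only: of_nat_le_iff)
      define x where "x = (real j + 1) / (real m * p)"
      have "x - 1 = (real j + 1 - real m * p) / (real m * p)" unfolding x_def using mp0 m0 p by (simp add: diff_divide_distrib)
      hence "\<bar>x - 1\<bar> = \<bar>real j + 1 - real m * p\<bar> / (real m * p)" using mp0 by simp
      also have "\<dots> \<le> (\<delta> * real m + 1) / (real m * p)"
        using jw mp0 by (intro divide_right_mono) auto
      also have "\<dots> = \<delta> * real m / (real m * p) + 1 / (real m * p)" by (simp add: add_divide_distrib)
      also have "\<delta> * real m / (real m * p) \<le> \<eta> * p / 2 * real m / (real m * p)"
        using d2 mp0 by (intro divide_right_mono) auto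
      also have "\<eta> * p / 2 * real m / (real m * p) = \<eta> / 2" using m0 p by (simp add: field_simps)
      also have "1 / (real m * p) < \<eta> / 4"
      proof -
        have "4 / \<eta> < real m * p" using mpb of_nat_0_le_iff[of N] by linarith
        thus ?thesis using \<eta> mp0 by (simp add: field_simps)
      qed
      finally have "\<bar>x - 1\<bar> < \<eta>" using \<eta> by linarith
      hence ux: "\<bar>u m j - 1\<bar> < min (\<epsilon> / 2) 1" using \<eta>2 unfolding u_def x_def by blast
      have u2: "u m j \<le> 2" using ux by linarith
      have "F m j = (h (Suc j) - 1) * u m j + (u m j - 1)" unfolding F_def by (simp add: algebra_simps)
      hence "\<bar>F m j\<bar> \<le> \<bar>h (Suc j) - 1\<bar> * u m j + \<bar>u m j - 1\<bar>"
        using u_nn[of m j] by (simp add: abs_mult abs_triangle_ineq[THEN order_trans] abs_of_nonneg)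
      also have "\<bar>h (Suc j) - 1\<bar> * u m j \<le> \<epsilon> / 4 * 2"
        using hN u2 u_nn[of m j] e by (intro mult_mono) auto
      finally show "\<bar>F m j\<bar> \<le> \<epsilon>" using ux by linarith
    qed
    thus ?thesis using \<delta> by blast
  qed
  have c: "(\<lambda>m. \<Sum>j\<le>m. F m j * bn m p j) \<longlonglongrightarrow> 0"
    by (rule conc[OF p FB Blim win])
  have "(\<lambda>m. (\<Sum>j\<le>m. F m j * bn m p j) + 1) \<longlonglongrightarrow> 0 + 1"
    by (intro tendsto_intros c)
  moreover have "(\<Sum>j\<le>m. F m j * bn m p j) + 1 = (\<Sum>j\<le>m. h (Suc j) * ((real j + 1) / (real m * p)) powr (\<theta> - 1) * bn m p j)" for m
  proof -
    have "(\<Sum>j\<le>m. F m j * bn m p j) = (\<Sum>j\<le>m. h (Suc j) * ((real j + 1) / (real m * p)) powr (\<theta> - 1) * bn m p j) - (\<Sum>j\<le>m. bn m p j)"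
      unfolding F_def u_def by (simp add: sum_subtractf[symmetric] algebra_simps)
    thus ?thesis using bn_sum[of m p] by simp
  qed
  ultimately show ?thesis by simp
qed


lemma gamma_lborel:
  fixes s w :: real assumes s: "s > 0" and w: "w > 0"
  shows "has_bochner_integral lborel (\<lambda>l. indicator {0<..} l * (l powr (s - 1) * exp (- w * l))) (Gamma s / w powr s)"
proof -
  define f where "f t = indicator {0..} t * t powr (s - 1) / exp t" for t :: real
  define g where "g l = indicator {0<..} l * (l powr (s - 1) * exp (- w * l))" for l :: real
  have fm[measurable]: "f \<in> borel_measurable borel" unfolding f_def by measurable
  have gm[measurable]: "g \<in> borel_measurable borel" unfolding g_def by measurable
  have g0: "g l \<ge> 0" for l unfolding g_def by (simp add: indicator_def)
  have fg: "f (0 + w * x) = w powr (s - 1) * g x" for x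
  proof (cases "x > 0")
    case True
    thus ?thesis using w unfolding f_def g_def by (simp add: powr_mult exp_minus field_simps)
  next
    case False
    hence "x = 0 \<or> x < 0" by auto
    thus ?thesis using w unfolding f_def g_def by (auto simp: indicator_def zero_le_mult_iff)
  qed
  have "ennreal (Gamma s) = (\<integral>\<^sup>+x. ennreal (f x) \<partial>lborel)"
    using Gamma_conv_nn_integral_real[OF s] unfolding f_def by simp
  also have "\<dots> = ennreal \<bar>w\<bar> * (\<integral>\<^sup>+x. ennreal (f (0 + w * x)) \<partial>lborel)"
    using w by (intro nn_integral_real_affine) auto
  also have "(\<integral>\<^sup>+x. ennreal (f (0 + w * x)) \<partial>lborel) = (\<integral>\<^sup>+x. ennreal (w powr (s - 1)) * ennreal (g x) \<partial>lborel)"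
    unfolding fg using w g0 by (intro nn_integral_cong) (simp add: ennreal_mult)
  also have "\<dots> = ennreal (w powr (s - 1)) * (\<integral>\<^sup>+x. ennreal (g x) \<partial>lborel)"
    by (rule nn_integral_cmult) measurable
  finally have eq: "ennreal (Gamma s) = ennreal (w powr s) * (\<integral>\<^sup>+x. ennreal (g x) \<partial>lborel)"
    using w by (simp add: ennreal_mult[symmetric] mult.assoc[symmetric] powr_diff)
  have "(\<integral>\<^sup>+x. ennreal (g x) \<partial>lborel) = ennreal (1 / w powr s) * (ennreal (w powr s) * (\<integral>\<^sup>+x. ennreal (g x) \<partial>lborel))"
    using w by (simp add: mult.assoc[symmetric] ennreal_mult[symmetric])
  also have "\<dots> = ennreal (Gamma s / w powr s)" unfolding eq[symmetric]
    using w s by (simp add: ennreal_mult[symmetric])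
  finally have "(\<integral>\<^sup>+x. ennreal (g x) \<partial>lborel) = ennreal (Gamma s / w powr s)" .
  hence "has_bochner_integral lborel g (Gamma s / w powr s)"
    using s w g0 by (intro has_bochner_integral_nn_integral) auto
  thus ?thesis unfolding g_def .
qed


lemma J_props:
  fixes s w :: real assumes s: "s > 0" and w: "w > 0"
  shows "set_integrable lborel {0<..} (\<lambda>l. l powr (s - 1) * exp (- w * l))"
    and "(LINT l:{0<..}|lborel. l powr (s - 1) * exp (- w * l)) = Gamma s / w powr s"
  using gamma_lborel[OF s w]
  unfolding set_integrable_def set_lebesgue_integral_def has_bochner_integral_iff
  by auto

lemma I_ratio:
  fixes w chi \<theta> :: real assumes w: "w > 0" and c: "chi > 0" and th: "\<theta> > 0"
  shows "(\<lambda>k. (LINT l:{0<..}|lborel. l powr (real k + \<theta> - 1) * exp (- w * l) * exp (- chi / (2 * l)))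
            * w powr (real k + \<theta>) / (fact k * real k powr (\<theta> - 1))) \<longlonglongrightarrow> 1"
proof -
  define I where "I k = (LINT l:{0<..}|lborel. l powr (real k + \<theta> - 1) * exp (- w * l) * exp (- chi / (2 * l)))" for k :: nat
  define J where "J s = (LINT l:{0<..}|lborel. l powr (s - 1) * exp (- w * l))" for s :: real
  have bnd: "\<bar>1 - I k / J (real k + \<theta>)\<bar> \<le> chi / 2 * w / (real k + \<theta> - 1)" if k: "k \<ge> 1" for k
  proof -
    define s where "s = real k + \<theta>"
    have s0: "s > 0" "s - 1 > 0" using k th unfolding s_def by auto
    have iJ: "set_integrable lborel {0<..} (\<lambda>l. l powr (s - 1) * exp (- w * l))"
      and vJ: "J s = Gamma s / w powr s" using J_props[OF s0(1) w] unfolding J_def by auto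
    have iJ1: "set_integrable lborel {0<..} (\<lambda>l. l powr (s - 1 - 1) * exp (- w * l))"
      and vJ1: "J (s - 1) = Gamma (s - 1) / w powr (s - 1)" using J_props[OF s0(2) w] unfolding J_def by auto
    have iI: "set_integrable lborel {0<..} (\<lambda>l. l powr (s - 1) * exp (- w * l) * exp (- chi / (2 * l)))"
      unfolding set_integrable_def
    proof (rule Bochner_Integration.integrable_bound[OF iJ[unfolded set_integrable_def]])
      show "(\<lambda>l. indicat_real {0<..} l *\<^sub>R (l powr (s - 1) * exp (- w * l) * exp (- chi / (2 * l)))) \<in> borel_measurable lborel"
        by measurable
      show "AE l in lborel. norm (indicat_real {0<..} l *\<^sub>R (l powr (s - 1) * exp (- w * l) * exp (- chi / (2 * l))))
              \<le> norm (indicat_real {0<..} l *\<^sub>R (l powr (s - 1) * exp (- w * l)))"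
      proof (intro AE_I2)
        fix l :: real
        show "norm (indicat_real {0<..} l *\<^sub>R (l powr (s - 1) * exp (- w * l) * exp (- chi / (2 * l))))
              \<le> norm (indicat_real {0<..} l *\<^sub>R (l powr (s - 1) * exp (- w * l)))"
        proof (cases "l > 0")
          case True
          have "exp (- chi / (2 * l)) \<le> 1" using True c by simp
          thus ?thesis using True by (simp add: abs_mult mult_left_le)
        qed (simp add: indicator_def)
      qed
    qed
    have Ik: "I k = (LINT l:{0<..}|lborel. l powr (s - 1) * exp (- w * l) * exp (- chi / (2 * l)))"
      unfolding I_def s_def by (simp add: algebra_simps)
    have IleJ: "I k \<le> J s" unfolding Ik J_def
    proof (rule set_integral_mono[OF iI iJ])
      fix l :: real assume "l \<in> {0<..}"
      hence l: "l > 0" by simp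
      have "exp (- chi / (2 * l)) \<le> 1" using l c by simp
      thus "l powr (s - 1) * exp (- w * l) * exp (- chi / (2 * l)) \<le> l powr (s - 1) * exp (- w * l)"
        using l by (simp add: mult_left_le)
    qed
    have "J s - I k = (LINT l:{0<..}|lborel. l powr (s - 1) * exp (- w * l) - l powr (s - 1) * exp (- w * l) * exp (- chi / (2 * l)))"
      unfolding Ik J_def by (rule set_integral_diff(2)[OF iJ iI, symmetric])
    also have "\<dots> \<le> (LINT l:{0<..}|lborel. chi / 2 * (l powr (s - 1 - 1) * exp (- w * l)))"
    proof (rule set_integral_mono)
      show "set_integrable lborel {0<..} (\<lambda>l. l powr (s - 1) * exp (- w * l) - l powr (s - 1) * exp (- w * l) * exp (- chi / (2 * l)))"
        by (rule set_integral_diff(1)[OF iJ iI])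
      show "set_integrable lborel {0<..} (\<lambda>l. chi / 2 * (l powr (s - 1 - 1) * exp (- w * l)))"
        using iJ1 by (rule set_integrable_mult_right)
      fix l :: real assume "l \<in> {0<..}"
      hence l: "l > 0" by simp
      define x where "x = chi / (2 * l)"
      have "1 + - x \<le> exp (- x)" by (rule exp_ge_add_one_self)
      moreover have "- chi / (2 * l) = - x" unfolding x_def by simp
      ultimately have e1: "1 - exp (- chi / (2 * l)) \<le> chi / (2 * l)" unfolding x_def by simp
      have pw: "l powr (s - 1 - 1) = l powr (s - 1) / l" using powr_diff[of l "s - 1" 1] l by simp
      have nn: "l powr (s - 1) * exp (- w * l) \<ge> 0" by simp
      have "l powr (s - 1) * exp (- w * l) * (1 - exp (- chi / (2 * l))) \<le> l powr (s - 1) * exp (- w * l) * (chi / (2 * l))"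
        by (rule mult_left_mono[OF e1 nn])
      thus "l powr (s - 1) * exp (- w * l) - l powr (s - 1) * exp (- w * l) * exp (- chi / (2 * l)) \<le> chi / 2 * (l powr (s - 1 - 1) * exp (- w * l))"
        unfolding pw using l by (simp add: algebra_simps)
    qed
    also have "\<dots> = chi / 2 * J (s - 1)" unfolding J_def by (simp add: set_integral_mult_right)
    finally have D: "J s - I k \<le> chi / 2 * J (s - 1)" .
    have Jpos: "J s > 0" unfolding vJ using s0 w by simp
    have g: "Gamma s = (s - 1) * Gamma (s - 1)"
      using Gamma_plus1[of "s - 1"] s0 nonpos_Ints_nonpos[of "s - 1"] by force
    have "\<bar>1 - I k / J s\<bar> = (J s - I k) / J s" using Jpos IleJ by (simp add: field_simps)
    also have "\<dots> \<le> chi / 2 * J (s - 1) / J s" using D Jpos by (intro divide_right_mono) auto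
    also have "\<dots> = chi / 2 * w / (s - 1)"
    proof -
      have wp: "w powr s = w powr (s - 1) * w" using w by (simp add: powr_diff)
      have gp: "Gamma (s - 1) > 0" using Gamma_real_pos[OF s0(2)] .
      have "w powr (s - 1) > 0" using w by simp
      thus ?thesis unfolding vJ vJ1 g wp using s0 w gp by (simp add: divide_simps) (metis gp less_irrefl)
    qed
    finally show ?thesis unfolding s_def .
  qed
  have g0: "(\<lambda>k::nat. chi / 2 * w / (real k + \<theta> - 1)) \<longlonglongrightarrow> 0"
  proof -
    have "filterlim (\<lambda>k::nat. (\<theta> - 1) + real k) at_top sequentially"
      by (rule filterlim_tendsto_add_at_top[OF tendsto_const filterlim_real_sequentially])
    hence "(\<lambda>k::nat. chi / 2 * w * inverse ((\<theta> - 1) + real k)) \<longlonglongrightarrow> chi / 2 * w * 0"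
      by (rule tendsto_mult[OF tendsto_const tendsto_inverse_0_at_top])
    moreover have e: "\<And>k. (\<theta> - 1) + real k = real k + \<theta> - 1" by simp
    ultimately show ?thesis unfolding e by (simp only: divide_inverse mult_zero_right)
  qed
  have "(\<lambda>k. 1 - I k / J (real k + \<theta>)) \<longlonglongrightarrow> 0"
  proof (rule Lim_null_comparison[OF _ g0])
    show "eventually (\<lambda>k. norm (1 - I k / J (real k + \<theta>)) \<le> chi / 2 * w / (real k + \<theta> - 1)) sequentially"
      using eventually_ge_at_top[of "1::nat"] by eventually_elim (use bnd in \<open>simp only: real_norm_def\<close>)
  qed
  hence r: "(\<lambda>k. I k / J (real k + \<theta>)) \<longlonglongrightarrow> 1"
  proof -
    have "(\<lambda>k. 1 - (1 - I k / J (real k + \<theta>))) \<longlonglongrightarrow> 1 - 0"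
      by (intro tendsto_diff tendsto_const) fact
    thus ?thesis by simp
  qed
  have "(\<lambda>k. I k / J (real k + \<theta>) * (Gamma (real k + \<theta>) / (fact k * real k powr (\<theta> - 1)))) \<longlonglongrightarrow> 1 * 1"
    by (intro tendsto_mult r gamma_ratio th)
  moreover have "I k / J (real k + \<theta>) * (Gamma (real k + \<theta>) / (fact k * real k powr (\<theta> - 1)))
     = I k * w powr (real k + \<theta>) / (fact k * real k powr (\<theta> - 1))" for k
  proof -
    have s0: "real k + \<theta> > 0" using th by simp
    define JJ where "JJ = J (real k + \<theta>)"
    define W where "W = w powr (real k + \<theta>)"
    have JJv: "JJ = Gamma (real k + \<theta>) / W"
      using J_props(2)[OF s0 w] unfolding J_def JJ_def W_def .
    moreover have Wp: "W > 0" using w unfolding W_def by simp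
    ultimately have JW: "Gamma (real k + \<theta>) = JJ * W" by simp
    have Jp: "JJ \<noteq> 0" using JJv Wp Gamma_real_pos[OF s0] by (metis divide_eq_0_iff less_irrefl)
    have "I k / JJ * (Gamma (real k + \<theta>) / (fact k * real k powr (\<theta> - 1))) = (I k * W * JJ) / ((fact k * real k powr (\<theta> - 1)) * JJ)"
      unfolding JW by (simp only: mult_ac times_divide_eq_left times_divide_eq_right divide_divide_eq_left)
    also have "\<dots> = I k * W / (fact k * real k powr (\<theta> - 1))"
      by (rule nonzero_mult_divide_mult_cancel_right[OF Jp])
    finally show ?thesis unfolding JJ_def W_def .
  qed
  ultimately show ?thesis unfolding I_def by simp
qed


lemma geo1_sum_eq: "geo1_sum_pmf q k = map_pmf (\<lambda>x. x + k) (neg_binomial_pmf k q)"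
proof (induction k)
  case 0 thus ?case by simp
next
  case (Suc k)
  show ?case
    unfolding geo1_sum_pmf.simps Suc geo1_pmf_def neg_binomial_pmf_Suc
    by (simp add: map_pmf_def pair_pmf_def bind_assoc_pmf bind_return_pmf bind_return_pmf'
        bind_commute_pmf[of "geometric_pmf q"] algebra_simps)
qed

lemma pmf_geo1_sum:
  assumes q: "0 < q" "q \<le> 1"
  shows "pmf (geo1_sum_pmf q k) n = (if k \<le> n then real ((n - 1) choose (n - k)) * q ^ k * (1 - q) ^ (n - k) else 0)"
proof (cases "k \<le> n")
  case True
  have "pmf (geo1_sum_pmf q k) n = pmf (map_pmf (\<lambda>x. x + k) (neg_binomial_pmf k q)) ((n - k) + k)"
    using True by (simp add: geo1_sum_eq)
  also have "\<dots> = pmf (neg_binomial_pmf k q) (n - k)"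
    by (rule pmf_map_inj') (simp add: inj_def)
  also have "\<dots> = real ((n - k + k - 1) choose (n - k)) * q ^ k * (1 - q) ^ (n - k)"
    using q by (intro pmf_neg_binomial) auto
  finally show ?thesis using True by simp
next
  case False
  have "pmf (geo1_sum_pmf q k) n = 0" unfolding geo1_sum_eq
    using False by (intro pmf_map_outside) auto
  thus ?thesis using False by simp
qed


lemma mixed_eq:
  fixes \<psi> chi \<theta> :: real
  assumes "\<psi> > 0" "chi > 0"
  shows "mixed_poisson_gig \<psi> chi \<theta> k =
    (\<psi> / chi) powr (\<theta> / 2) / (2 * besselK \<theta> (sqrt (\<psi> * chi))) / fact k *
    (LINT l:{0<..}|lborel. l powr (real k + \<theta> - 1) * exp (- ((2 + \<psi>) / 2) * l) * exp (- chi / (2 * l)))"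
proof -
  define Kg where "Kg = (\<psi> / chi) powr (\<theta> / 2) / (2 * besselK \<theta> (sqrt (\<psi> * chi)))"
  have "mixed_poisson_gig \<psi> chi \<theta> k =
     (LINT l:{0<..}|lborel. Kg / fact k * (l powr (real k + \<theta> - 1) * exp (- ((2 + \<psi>) / 2) * l) * exp (- chi / (2 * l))))"
    unfolding mixed_poisson_gig_def
  proof (intro set_lebesgue_integral_cong allI impI)
    show "{0::real<..} \<in> sets lborel" by simp
  next
    fix l :: real assume "l \<in> {0<..}"
    hence l: "l > 0" by simp
    have pw: "l ^ k * l powr (\<theta> - 1) = l powr (real k + \<theta> - 1)"
      using l powr_add[of l "real k" "\<theta> - 1"] by (simp add: powr_realpow[symmetric] algebra_simps)
    have ex: "exp (- l) * exp (- (chi / l + \<psi> * l) / 2) = exp (- ((2 + \<psi>) / 2) * l) * exp (- chi / (2 * l))"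
      unfolding exp_add[symmetric] using l by (simp add: field_simps)
    have "pmf (poisson_pmf l) k * gig_density \<psi> chi \<theta> l
        = Kg / fact k * ((l ^ k * l powr (\<theta> - 1)) * (exp (- l) * exp (- (chi / l + \<psi> * l) / 2)))"
      using l unfolding gig_density_def Kg_def by (simp add: pmf_poisson ac_simps)
    also have "\<dots> = Kg / fact k * (l powr (real k + \<theta> - 1) * exp (- ((2 + \<psi>) / 2) * l) * exp (- chi / (2 * l)))"
      unfolding pw ex by (simp add: mult.assoc)
    finally show "pmf (poisson_pmf l) k * gig_density \<psi> chi \<theta> l = Kg / fact k * (l powr (real k + \<theta> - 1) * exp (- ((2 + \<psi>) / 2) * l) * exp (- chi / (2 * l)))" .
  qed
  also have "\<dots> = Kg / fact k * (LINT l:{0<..}|lborel. l powr (real k + \<theta> - 1) * exp (- ((2 + \<psi>) / 2) * l) * exp (- chi / (2 * l)))"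
    by (rule set_integral_mult_right)
  finally show ?thesis unfolding Kg_def .
qed


lemma term_aux:
  fixes w z q p \<theta> :: real
  assumes w: "w > 0" and z: "z > 0" and qw: "q = w * p / z" and q1: "1 - q = (1 - p) / z" and j: "j \<le> m"
  shows "q ^ Suc j * (1 - q) ^ (m - j) / w powr (real (Suc j) + \<theta>)
       = w powr (- \<theta>) * p / z ^ Suc m * (p ^ j * (1 - p) ^ (m - j))"
proof -
  have zz: "z ^ Suc m = z ^ Suc j * z ^ (m - j)"
    using j by (simp add: power_add[symmetric])
  have wp: "w powr (real (Suc j) + \<theta>) = w ^ Suc j * w powr \<theta>"
    using w by (simp add: powr_add powr_realpow)
  have wm: "w powr (- \<theta>) = 1 / w powr \<theta>" by (simp add: powr_minus_divide)
  have "q ^ Suc j = w ^ Suc j * p ^ Suc j / z ^ Suc j" unfolding qw by (simp add: power_divide power_mult_distrib)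
  moreover have "(1 - q) ^ (m - j) = (1 - p) ^ (m - j) / z ^ (m - j)" unfolding q1 by (simp add: power_divide)
  ultimately show ?thesis unfolding zz wp wm using w z by (simp add: field_simps)
qed

lemma canc: "(P::real) > 0 \<Longrightarrow> W > 0 \<Longrightarrow> f > 0 \<Longrightarrow> I / f = (I * W / (f * P)) * P / W"
  by (simp add: field_simps)

theorem proposition3:
  fixes \<psi> chi \<theta> q :: real
  assumes "\<psi> > 0" and "chi > 0" and "\<theta> > 0" and "0 < q" and "q < 1"
  defines "C \<equiv> \<psi> powr (\<theta> / 2) / besselK \<theta> (sqrt (chi * \<psi>))"
      and "z1 \<equiv> 1 / (1 - \<psi> * q / (2 + \<psi>))"
      and "D \<equiv> (2 + \<psi>) * (2 + \<psi> * (1 - q)) / (2 * q)"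
  shows "(\<lambda>n. compound_prob \<psi> chi \<theta> q n) \<sim>[sequentially]
           (\<lambda>n. C * chi powr (- \<theta> / 2) * D powr (- \<theta>) * (2 * real n) powr (\<theta> - 1)
                 * z1 powr (- real n))"
proof -
  note ps = assms(1) and ch = assms(2) and th = assms(3) and q0 = assms(4) and q1 = assms(5)
  define K where "K = besselK \<theta> (sqrt (\<psi> * chi))"
  have CK: "C = \<psi> powr (\<theta> / 2) / K" unfolding C_def K_def by (simp add: mult.commute)
  define w where "w = (2 + \<psi>) / 2"
  have w0: "w > 0" unfolding w_def using ps by simp
  define Kg where "Kg = (\<psi> / chi) powr (\<theta> / 2) / (2 * K)"
  define Ik where "Ik k = (LINT l:{0<..}|lborel. l powr (real k + \<theta> - 1) * exp (- w * l) * exp (- chi / (2 * l)))" for k :: nat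
  have p: "mixed_poisson_gig \<psi> chi \<theta> k = Kg / fact k * Ik k" for k
    using mixed_eq[OF ps ch, of \<theta> k] unfolding Kg_def K_def Ik_def w_def by simp
  have a: "compound_prob \<psi> chi \<theta> q n = (\<Sum>k\<le>n. Kg / fact k * Ik k * pmf (geo1_sum_pmf q k) n)" for n
    unfolding compound_prob_def p by (rule suminf_finite) (use q0 q1 in \<open>auto simp: pmf_geo1_sum\<close>)
  show ?thesis
  proof (cases "K = 0")
    case True
    hence "Kg = 0" "C = 0" unfolding Kg_def CK by simp_all
    thus ?thesis unfolding a by simp
  next
    case False
    have r0: "\<psi> * q / (2 + \<psi>) < 1"
    proof -
      have "\<psi> * q < 2 + \<psi>" using ps q1 q0 by (smt (verit) mult_less_cancel_left2)
      thus ?thesis using ps by simp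
    qed
    have z0: "z1 > 0" unfolding z1_def using r0 by simp
    define pp where "pp = q * z1 / w"
    have zinv: "1 / z1 = 1 - \<psi> * q / (2 + \<psi>)" unfolding z1_def by simp
    have qw: "q = w * pp / z1" unfolding pp_def using z0 w0 by simp
    have qq1: "1 - q = (1 - pp) / z1"
    proof -
      have "(1 - pp) / z1 = 1 / z1 - q / w" unfolding pp_def using z0 w0 by (simp add: field_simps)
      also have "\<dots> = 1 - q"
      proof -
        have n2: "2 + \<psi> \<noteq> 0" using ps by simp
        have n3: "\<psi> + 2 \<noteq> 0" using ps by simp
        have "q / ((2 + \<psi>) / 2) = 2 * q / (2 + \<psi>)" by simp
        hence "\<psi> * q / (2 + \<psi>) + q / ((2 + \<psi>) / 2) = (\<psi> * q + 2 * q) / (2 + \<psi>)"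
          by (simp add: add_divide_distrib)
        also have "\<dots> = q * (2 + \<psi>) / (2 + \<psi>)" by (simp add: algebra_simps)
        also have "\<dots> = q" using n2 by simp
        finally have "\<psi> * q / (2 + \<psi>) + q / ((2 + \<psi>) / 2) = q" .
        thus ?thesis unfolding zinv w_def by linarith
      qed
      finally show ?thesis ..
    qed
    have pp0: "pp > 0" unfolding pp_def using q0 z0 w0 by simp
    have pp1: "pp < 1"
    proof -
      have "(1 - pp) / z1 > 0" using qq1 q1 by simp
      thus ?thesis using z0 by (simp add: divide_pos_pos zero_less_divide_iff)
    qed
    have s0: "2 + \<psi> - \<psi> * q > 0" using r0 ps by (simp add: field_simps)
    have n2: "2 + \<psi> > 0" using ps by simp
    have z1v: "z1 = (2 + \<psi>) / (2 + \<psi> - \<psi> * q)"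
    proof -
      have "1 - \<psi> * q / (2 + \<psi>) = (2 + \<psi> - \<psi> * q) / (2 + \<psi>)"
        using n2 by (simp add: diff_divide_distrib)
      thus ?thesis unfolding z1_def by simp
    qed
    have ppv: "pp = 2 * q / (2 + \<psi> - \<psi> * q)"
    proof -
      have e4: "4 + \<psi> * 2 = 2 * (2 + \<psi>)" by simp
      have "z1 / w = (4 + \<psi> * 2) / ((2 + \<psi> - \<psi> * q) * (2 + \<psi>))" unfolding z1v w_def using n2 s0
        by (simp add: divide_divide_eq_left divide_divide_eq_right)
      also have "\<dots> = 2 * (2 + \<psi>) / ((2 + \<psi> - \<psi> * q) * (2 + \<psi>))" by (simp only: e4)
      also have "\<dots> = 2 / (2 + \<psi> - \<psi> * q)"
        by (rule nonzero_mult_divide_mult_cancel_right) (use n2 in simp)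
      finally have zw: "z1 / w = 2 / (2 + \<psi> - \<psi> * q)" .
      have "pp = q * (z1 / w)" unfolding pp_def by simp
      thus ?thesis unfolding zw by simp
    qed
    have Dv: "D = 2 * w / pp"
    proof -
      have "D = (2 + \<psi>) * (2 + \<psi> - \<psi> * q) / (2 * q)" unfolding D_def by (simp add: algebra_simps)
      also have "\<dots> = 2 * w / pp" unfolding ppv w_def using n2 s0 q0 by (simp add: divide_divide_eq_right) (simp add: field_simps)
      finally show ?thesis .
    qed
    define hh where "hh k = Ik k * w powr (real k + \<theta>) / (fact k * real k powr (\<theta> - 1))" for k :: nat
    have hh1: "hh \<longlonglongrightarrow> 1" unfolding hh_def Ik_def by (rule I_ratio[OF w0 ch th])
    define W where "W m = (\<Sum>j\<le>m. hh (Suc j) * ((real j + 1) / (real m * pp)) powr (\<theta> - 1) * bn m pp j)" for m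
    have W1: "W \<longlonglongrightarrow> 1" unfolding W_def by (rule window[OF th pp0 pp1 hh1])
    define A where "A = Kg * w powr (- \<theta>) * pp"
    have aS: "compound_prob \<psi> chi \<theta> q (Suc m) = A / z1 ^ Suc m * (real m * pp) powr (\<theta> - 1) * W m"
      if m: "m > 0" for m
    proof -
      have mp0: "real m * pp > 0" using m pp0 by simp
      have tj: "Kg / fact (Suc j) * Ik (Suc j) * pmf (geo1_sum_pmf q (Suc j)) (Suc m)
          = A / z1 ^ Suc m * (real m * pp) powr (\<theta> - 1) * (hh (Suc j) * ((real j + 1) / (real m * pp)) powr (\<theta> - 1) * bn m pp j)"
        if j: "j \<le> m" for j
      proof -
        have pm: "pmf (geo1_sum_pmf q (Suc j)) (Suc m) = real (m choose j) * (q ^ Suc j * (1 - q) ^ (m - j))"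
          using j q0 q1 pmf_geo1_sum[of q "Suc j" "Suc m"] by (simp add: binomial_symmetric[OF j, symmetric] del: geo1_sum_pmf.simps)
        define P where "P = (real j + 1) powr (\<theta> - 1)"
        define Wp where "Wp = w powr (real (Suc j) + \<theta>)"
        have Pp: "P > 0" unfolding P_def by simp
        have Wpp: "Wp > 0" unfolding Wp_def using w0 by simp
        have ik: "Ik (Suc j) / fact (Suc j) = hh (Suc j) * P / Wp"
          unfolding hh_def using canc[OF Pp Wpp, of "fact (Suc j)" "Ik (Suc j)"] unfolding P_def Wp_def
          by (simp only: fact_gt_zero of_nat_Suc add_ac simp_thms)
        have pw: "P = ((real j + 1) / (real m * pp)) powr (\<theta> - 1) * (real m * pp) powr (\<theta> - 1)"
          unfolding P_def using mp0 m pp0 by (simp add: powr_divide)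
        have ta: "q ^ Suc j * (1 - q) ^ (m - j) / Wp = w powr (- \<theta>) * pp / z1 ^ Suc m * (pp ^ j * (1 - pp) ^ (m - j))"
          unfolding Wp_def by (rule term_aux[OF w0 z0 qw qq1 j])
        have "Kg / fact (Suc j) * Ik (Suc j) * pmf (geo1_sum_pmf q (Suc j)) (Suc m)
            = Kg * (Ik (Suc j) / fact (Suc j)) * pmf (geo1_sum_pmf q (Suc j)) (Suc m)" by simp
        also have "\<dots> = Kg * hh (Suc j) * P * real (m choose j) * (q ^ Suc j * (1 - q) ^ (m - j) / Wp)"
          unfolding ik pm by simp
        also have "\<dots> = Kg * hh (Suc j) * P * real (m choose j) * (w powr (- \<theta>) * pp / z1 ^ Suc m * (pp ^ j * (1 - pp) ^ (m - j)))"
          unfolding ta ..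
        also have "\<dots> = A / z1 ^ Suc m * (real m * pp) powr (\<theta> - 1) * (hh (Suc j) * ((real j + 1) / (real m * pp)) powr (\<theta> - 1) * bn m pp j)"
          unfolding A_def bn_def pw by (simp add: ac_simps)
        finally show ?thesis .
      qed
      have "compound_prob \<psi> chi \<theta> q (Suc m) = Kg / fact 0 * Ik 0 * pmf (geo1_sum_pmf q 0) (Suc m)
          + (\<Sum>j\<le>m. Kg / fact (Suc j) * Ik (Suc j) * pmf (geo1_sum_pmf q (Suc j)) (Suc m))"
        unfolding a by (rule sum.atMost_Suc_shift)
      also have "Kg / fact 0 * Ik 0 * pmf (geo1_sum_pmf q 0) (Suc m) = 0" by simp
      also have "(\<Sum>j\<le>m. Kg / fact (Suc j) * Ik (Suc j) * pmf (geo1_sum_pmf q (Suc j)) (Suc m))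
          = (\<Sum>j\<le>m. A / z1 ^ Suc m * (real m * pp) powr (\<theta> - 1) * (hh (Suc j) * ((real j + 1) / (real m * pp)) powr (\<theta> - 1) * bn m pp j))"
        by (intro sum.cong refl tj) simp
      also have "\<dots> = A / z1 ^ Suc m * (real m * pp) powr (\<theta> - 1) * W m"
        unfolding W_def by (simp add: sum_distrib_left)
      finally show ?thesis by simp
    qed
    define T where "T n = C * chi powr (- \<theta> / 2) * D powr (- \<theta>) * (2 * real n) powr (\<theta> - 1) * z1 powr (- real n)" for n :: nat
    have D0: "D > 0" unfolding Dv using w0 pp0 by simp
    have C0: "C \<noteq> 0" unfolding CK using False ps by simp
    have E: "A * pp powr (\<theta> - 1) = C * chi powr (- \<theta> / 2) * D powr (- \<theta>) * 2 powr (\<theta> - 1)"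
    proof -
      have e1: "w powr (- \<theta>) = 1 / w powr \<theta>" by (simp add: powr_minus_divide)
      have e2: "pp powr (\<theta> - 1) = pp powr \<theta> / pp" using pp0 by (simp add: powr_diff)
      have e3: "chi powr (- \<theta> / 2) = 1 / chi powr (\<theta> / 2)" by (simp add: powr_minus_divide)
      have e4: "D powr (- \<theta>) = pp powr \<theta> / (2 powr \<theta> * w powr \<theta>)"
        unfolding Dv using w0 pp0 by (simp add: powr_minus_divide powr_divide powr_mult)
      have e5: "(2::real) powr (\<theta> - 1) = 2 powr \<theta> / 2" by (simp add: powr_diff)
      have e6: "(\<psi> / chi) powr (\<theta> / 2) = \<psi> powr (\<theta> / 2) / chi powr (\<theta> / 2)"
        using ps ch by (simp add: powr_divide)
      have p1: "pp powr \<theta> > 0" "w powr \<theta> > 0" "chi powr (\<theta> / 2) > 0" "(2::real) powr \<theta> > 0"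
        using pp0 w0 ch by simp_all
      show ?thesis unfolding A_def Kg_def CK e1 e2 e3 e4 e5 e6 using p1 pp0 False
        by (simp add: field_simps)
    qed
    have ratio: "compound_prob \<psi> chi \<theta> q (Suc m) / T (Suc m) = W m * (real m / real (Suc m)) powr (\<theta> - 1)"
      if m: "m > 0" for m
    proof -
      have f1: "(real m * pp) powr (\<theta> - 1) = real m powr (\<theta> - 1) * pp powr (\<theta> - 1)"
        using pp0 by (simp add: powr_mult)
      have f2: "(2 * real (Suc m)) powr (\<theta> - 1) = 2 powr (\<theta> - 1) * real (Suc m) powr (\<theta> - 1)"
        by (simp add: powr_mult del: of_nat_Suc)
      have f3: "z1 powr (- real (Suc m)) = 1 / z1 ^ Suc m"
        using z0 by (simp add: powr_minus_divide powr_realpow del: of_nat_Suc)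
      have f4: "(real m / real (Suc m)) powr (\<theta> - 1) = real m powr (\<theta> - 1) / real (Suc m) powr (\<theta> - 1)"
        by (simp add: powr_divide del: of_nat_Suc)
      have T1: "T (Suc m) = C * chi powr (- \<theta> / 2) * D powr (- \<theta>) * 2 powr (\<theta> - 1) * real (Suc m) powr (\<theta> - 1) / z1 ^ Suc m"
        unfolding T_def f2 f3 by simp
      have q1': "C * chi powr (- \<theta> / 2) * D powr (- \<theta>) * 2 powr (\<theta> - 1) \<noteq> 0"
        using C0 ch D0 by simp
      have q2: "real (Suc m) powr (\<theta> - 1) > 0" "z1 ^ Suc m > 0" using z0 by simp_all
      show ?thesis unfolding aS[OF m] T1 f1 f4 E[symmetric] using q1' q2 E z0
        by (simp add: field_simps)
    qed
    have lim: "(\<lambda>m. W m * (real m / real (Suc m)) powr (\<theta> - 1)) \<longlonglongrightarrow> 1 * 1 powr (\<theta> - 1)"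
      by (intro tendsto_intros W1 LIMSEQ_n_over_Suc_n) auto
    have "(\<lambda>m. compound_prob \<psi> chi \<theta> q (Suc m) / T (Suc m)) \<longlonglongrightarrow> 1"
    proof -
      have "eventually (\<lambda>m. W m * (real m / real (Suc m)) powr (\<theta> - 1) = compound_prob \<psi> chi \<theta> q (Suc m) / T (Suc m)) sequentially"
        using eventually_gt_at_top[of "0::nat"] by eventually_elim (simp add: ratio del: of_nat_Suc)
      with lim show ?thesis by (simp add: tendsto_cong)
    qed
    hence "(\<lambda>n. compound_prob \<psi> chi \<theta> q n / T n) \<longlonglongrightarrow> 1"
      by (rule filterlim_sequentially_Suc[THEN iffD1])
    thus ?thesis unfolding T_def by (rule asymp_equivI')
  qed
qed
end
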